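(* Let $M\in\{0,1\}^{n\times n}$ have at least one $1$ entry, let $A$ be its symmetrization with eigenvalues $\lambda_1\geq\dots\geq\lambda_{2n}$, and let $\Delta$ be the maximum number of $1$ entries in a row or a column of $M$. Then $$\operatorname{pdisc}(M)\geq \frac{1}{\Delta}\sum_{i=2}^{n}\lambda_i^3.$$
   Context: Let $N=2n$, $p=|M|/n^2$ where $|M|$ is the number of $1$ entries. The symmetrization of $M$ is the symmetric matrix $A\in\mathbb{R}^{N\times N}$ with $A_{i,j+n}=A_{j+n,i}=M_{i,j}$ for $(i,j)\in[n]\times[n]$ and all other entries $0$. $L\in\mathbb{R}^{N\times N}$ is the adjacency matrix of the complete bipartite graph with parts $[n]$ and $[n+1,N]$. For $X\in\mathbb{R}^{N\times N}$, $\operatorname{disc}(X)=\langle X,A\rangle-p\langle X,L\rangle$ (entrywise inner product), and $\operatorname{pdisc}(M)=\max\{\operatorname{disc}(X): X\text{ symmetric positive semidefinite},\ X_{i,i}\leq1\ \forall i\}$. *)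

theory Defs
  imports "Jordan_Normal_Form.Matrix" "Jordan_Normal_Form.Char_Poly"
    "HOL-Computational_Algebra.Polynomial"
begin

text \<open>Indices are 0-based: the row index i of M (i < n) becomes vertex i of A,
  the column index j of M (j < n) becomes vertex j + n of A; N = 2n.\<close>

definition zero_one_mat :: "nat \<Rightarrow> real mat \<Rightarrow> bool" where
  "zero_one_mat n M \<longleftrightarrow> M \<in> carrier_mat n n \<and>
     (\<forall>i<n. \<forall>j<n. M $$ (i,j) = 0 \<or> M $$ (i,j) = 1)"

definition num_ones :: "nat \<Rightarrow> real mat \<Rightarrow> nat" where
  "num_ones n M = card {(i,j). i < n \<and> j < n \<and> M $$ (i,j) = 1}"

definition density :: "nat \<Rightarrow> real mat \<Rightarrow> real" where
  "density n M = real (num_ones n M) / (real n)^2"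

definition symmetrization :: "nat \<Rightarrow> real mat \<Rightarrow> real mat" where
  "symmetrization n M = mat (2*n) (2*n) (\<lambda>(i,j).
      if i < n \<and> n \<le> j then M $$ (i, j - n)
      else if j < n \<and> n \<le> i then M $$ (j, i - n)
      else 0)"

definition bip_complete :: "nat \<Rightarrow> real mat" where
  "bip_complete n = mat (2*n) (2*n) (\<lambda>(i,j).
      if (i < n \<and> n \<le> j) \<or> (j < n \<and> n \<le> i) then 1 else 0)"

definition entry_inner :: "nat \<Rightarrow> real mat \<Rightarrow> real mat \<Rightarrow> real" where
  "entry_inner N X Y = (\<Sum>i<N. \<Sum>j<N. X $$ (i,j) * Y $$ (i,j))"

definition disc :: "nat \<Rightarrow> real mat \<Rightarrow> real mat \<Rightarrow> real" where
  "disc n M X = entry_inner (2*n) X (symmetrization n M)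
                - density n M * entry_inner (2*n) X (bip_complete n)"

definition psd :: "nat \<Rightarrow> real mat \<Rightarrow> bool" where
  "psd N X \<longleftrightarrow> X \<in> carrier_mat N N \<and> transpose_mat X = X \<and>
     (\<forall>v \<in> carrier_vec N. v \<bullet> (X *\<^sub>v v) \<ge> 0)"

definition pdisc :: "nat \<Rightarrow> real mat \<Rightarrow> real" where
  "pdisc n M = Sup {disc n M X | X. psd (2*n) X \<and> (\<forall>i < 2*n. X $$ (i,i) \<le> 1)}"

definition max_degree :: "nat \<Rightarrow> real mat \<Rightarrow> nat" where
  "max_degree n M = Max ({card {j. j < n \<and> M $$ (i,j) = 1} | i. i < n}
                      \<union> {card {i. i < n \<and> M $$ (i,j) = 1} | j. j < n})"

text \<open>Eigenvalues with multiplicity (roots of the characteristic polynomial), in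
  non-increasing order; for a real symmetric matrix all eigenvalues are real.\<close>
definition eigenvalues_desc :: "real mat \<Rightarrow> real list" where
  "eigenvalues_desc A = rev (sorted_list_of_multiset (proots (char_poly A)))"

end

theory Submission
  imports Defs "Jordan_Normal_Form.Schur_Decomposition" "HOL-Combinatorics.Permutations"
begin

lemma sym_real_eigenvalue:
  fixes A :: "real mat"
  assumes A: "A \<in> carrier_mat N N" and sym: "A\<^sup>T = A" and N: "N > 0"
  shows "\<exists>e. eigenvalue A e"
proof -
  define Ac where "Ac = map_mat complex_of_real A"
  have Ac: "Ac \<in> carrier_mat N N" using A unfolding Ac_def by auto
  obtain as where as: "char_poly Ac = (\<Prod>a\<leftarrow>as. [:- a, 1:])" "length as = N"
    using char_poly_factorized[OF Ac] by blast
  then obtain a rest where asd: "as = a # rest" using N by (cases as) auto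
  have "poly (char_poly Ac) a = 0" unfolding as(1) asd by simp
  hence "eigenvalue Ac a" using eigenvalue_root_char_poly[OF Ac] by simp
  then obtain v where ev: "eigenvector Ac v a" unfolding eigenvalue_def by blast
  hence v: "v \<in> carrier_vec N" and v0: "v \<noteq> 0\<^sub>v N" and Av: "Ac *\<^sub>v v = a \<cdot>\<^sub>v v"
    unfolding eigenvector_def using Ac by auto
  have symA: "\<And>i j. i < N \<Longrightarrow> j < N \<Longrightarrow> A $$ (j,i) = A $$ (i,j)"
    using sym A by (metis carrier_matD index_transpose_mat(1))
  define s where "s = (\<Sum>i<N. cnj (v$i) * (Ac *\<^sub>v v) $ i)"
  define r where "r = (\<Sum>i<N. cnj (v$i) * v$i)"
  have s1: "s = a * r" unfolding s_def r_def Av using v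
    by (auto simp: sum_distrib_left intro!: sum.cong)
  have s2: "s = (\<Sum>i<N. \<Sum>j<N. cnj (v$i) * of_real (A$$(i,j)) * v$j)"
    unfolding s_def using v A Ac unfolding Ac_def
    by (auto simp: scalar_prod_def sum_distrib_left mult.assoc intro!: sum.cong)
  have "cnj s = (\<Sum>i<N. \<Sum>j<N. v$i * of_real (A$$(i,j)) * cnj (v$j))"
    unfolding s2 by (simp add: cnj_sum)
  also have "\<dots> = (\<Sum>j<N. \<Sum>i<N. v$i * of_real (A$$(i,j)) * cnj (v$j))"
    by (rule sum.swap)
  also have "\<dots> = s" unfolding s2
    by (intro sum.cong refl, simp add: symA mult.commute mult.left_commute)
  finally have cs: "cnj s = s" .
  have rreal: "r = of_real (\<Sum>i<N. (cmod (v$i))^2)"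
    unfolding r_def unfolding of_real_sum by (intro sum.cong refl) (metis complex_norm_square mult.commute of_real_power)
  have "(\<Sum>i<N. (cmod (v$i))^2) \<noteq> 0"
  proof
    assume "(\<Sum>i<N. (cmod (v$i))^2) = 0"
    hence "\<forall>i\<in>{..<N}. (cmod (v$i))^2 = 0" by (subst (asm) sum_nonneg_eq_0_iff) auto
    hence "v = 0\<^sub>v N" using v by (intro eq_vecI) auto
    thus False using v0 by simp
  qed
  hence r0: "r \<noteq> 0" unfolding rreal by (metis of_real_eq_0_iff)
  have cr: "cnj r = r" unfolding rreal by (rule complex_cnj_complex_of_real)
  have "cnj a * r = a * r" using cs unfolding s1 complex_cnj_mult cr by simp
  hence ca: "cnj a = a" using r0 by simp
  hence aeq: "a = of_real (Re a)" using complex_eq_iff[of a "cnj a"] by (simp add: complex_eq_iff)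
  have "char_poly Ac = map_poly of_real (char_poly A)"
    unfolding Ac_def by (rule of_real_hom.char_poly_hom[OF A])
  hence "poly (map_poly complex_of_real (char_poly A)) (of_real (Re a)) = 0"
    using \<open>poly (char_poly Ac) a = 0\<close> aeq by simp
  hence "of_real (poly (char_poly A) (Re a)) = (0::complex)"
    unfolding of_real_hom.poly_map_poly .
  hence "poly (char_poly A) (Re a) = 0" by simp
  thus ?thesis using eigenvalue_root_char_poly[OF A] by blast
qed

definition dmat :: "real list \<Rightarrow> real mat" where
  "dmat es = mat (length es) (length es) (\<lambda>(i,j). if i = j then es!i else 0)"

lemma real_conj_vec: "conjugate (w :: real vec) = w"
  by (rule eq_vecI) (auto simp: conjugate_vec_def)

lemma real_self_dot_nonneg: "(w :: real vec) \<bullet> w \<ge> 0"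
  unfolding scalar_prod_def by (auto intro: sum_nonneg)

lemma spectral:
  fixes A :: "real mat"
  assumes "A \<in> carrier_mat N N" "A\<^sup>T = A"
  shows "\<exists>U es. U \<in> carrier_mat N N \<and> length es = N \<and> U\<^sup>T * U = 1\<^sub>m N \<and> A = U * dmat es * U\<^sup>T"
  using assms
proof (induction N arbitrary: A)
  case 0
  show ?case
    by (rule exI[of _ "1\<^sub>m 0"], rule exI[of _ "[]"], insert 0(1), auto intro!: eq_matI simp: dmat_def)
next
  case (Suc m A)
  define N where "N = Suc m"
  have A: "A \<in> carrier_mat N N" and sym: "A\<^sup>T = A" using Suc.prems N_def by auto
  obtain e where "eigenvalue A e" using sym_real_eigenvalue[OF A sym] N_def by auto
  define v where "v = find_eigenvector A e"
  have ev: "eigenvector A v e" using find_eigenvector[OF A \<open>eigenvalue A e\<close>] v_def by simp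
  hence v: "v \<in> carrier_vec N" and v0: "v \<noteq> 0\<^sub>v N" and Av: "A *\<^sub>v v = e \<cdot>\<^sub>v v"
    unfolding eigenvector_def using A by auto
  interpret cof_vec_space N "TYPE(real)" .
  define b where "b = basis_completion v"
  note bc = basis_completion[OF v v0, folded b_def]
  from bc N_def obtain vs where bv: "b = v # vs" by (cases b) auto
  define ws where "ws = gram_schmidt N b"
  note gs = gram_schmidt_result[OF bc(2) bc(4) bc(5) ws_def]
  have wsN: "length ws = N" using gs bc by simp
  have hdws: "hd ws = v" unfolding ws_def bv using gram_schmidt_hd[OF v] by simp
  have ws0: "ws ! 0 = v" using hdws wsN N_def by (cases ws) auto
  have wsc: "\<And>i. i < N \<Longrightarrow> ws ! i \<in> carrier_vec N" using gs wsN by auto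
  have wsorth: "\<And>i j. i < N \<Longrightarrow> j < N \<Longrightarrow> (ws!i \<bullet> ws!j = 0) = (i \<noteq> j)"
    using corthogonalD[OF gs(2)] wsN by (simp add: real_conj_vec)
  define us where "us = map (\<lambda>w. (1 / sqrt (w \<bullet> w)) \<cdot>\<^sub>v w) ws"
  have usN: "length us = N" unfolding us_def using wsN by simp
  have usc: "\<And>i. i < N \<Longrightarrow> us ! i \<in> carrier_vec N" unfolding us_def using wsc wsN by simp
  have usorth: "us!i \<bullet> us!j = (if i = j then 1 else 0)" if "i < N" "j < N" for i j
  proof -
    have pos: "\<And>k. k < N \<Longrightarrow> ws!k \<bullet> ws!k > 0"
      using wsorth real_self_dot_nonneg by (metis less_eq_real_def)
    have "us!i \<bullet> us!j = (1 / sqrt (ws!i \<bullet> ws!i)) * (1 / sqrt (ws!j \<bullet> ws!j)) * (ws!i \<bullet> ws!j)"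
      unfolding us_def using that wsN wsc[OF that(1)] wsc[OF that(2)]
      by (simp add: smult_scalar_prod_distrib[of _ N] scalar_prod_smult_distrib[of _ N])
    thus ?thesis using that wsorth[OF that] pos[OF that(1)]
      by (auto simp: real_sqrt_mult[symmetric])
  qed
  define W where "W = mat_of_cols N us"
  have W: "W \<in> carrier_mat N N" unfolding W_def using usN by auto
  have colW: "\<And>j. j < N \<Longrightarrow> col W j = us ! j" unfolding W_def using usN usc by simp
  have WtW: "W\<^sup>T * W = 1\<^sub>m N"
    by (rule eq_matI, insert W usorth colW, auto)
  have WWt: "W * W\<^sup>T = 1\<^sub>m N"
    by (rule mat_mult_left_right_inverse[OF _ W WtW], insert W, auto)
  have us0: "us ! 0 = (1 / sqrt (v \<bullet> v)) \<cdot>\<^sub>v v" unfolding us_def using ws0 wsN N_def by simp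
  have Au0: "A *\<^sub>v (us ! 0) = e \<cdot>\<^sub>v (us ! 0)" unfolding us0
    using A v Av by (metis mult_mat_vec smult_smult_assoc mult.commute)
  define A' where "A' = W\<^sup>T * A * W"
  have A': "A' \<in> carrier_mat N N" unfolding A'_def using W A by auto
  have symA': "A'\<^sup>T = A'"
  proof -
    have "(W\<^sup>T * A * W)\<^sup>T = W\<^sup>T * (W\<^sup>T * A)\<^sup>T"
      by (rule transpose_mult[of _ N N _ N], insert W A, auto)
    also have "(W\<^sup>T * A)\<^sup>T = A\<^sup>T * W"
      by (subst transpose_mult[of _ N N _ N], insert W A, auto)
    finally show ?thesis unfolding A'_def using sym W A
      by (simp add: assoc_mult_mat[of _ N N _ N _ N])
  qed
  have A'col: "A' $$ (i,0) = (if i = 0 then e else 0)" if "i < N" for i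
  proof -
    have "A' $$ (i,0) = col W i \<bullet> (A *\<^sub>v col W 0)"
      unfolding A'_def using W A that N_def
      by (simp add: assoc_mult_mat[of _ N N _ N _ N] col_mult2[of _ N N] mult_mat_vec_def)
    also have "\<dots> = e * (us!i \<bullet> us!0)" using colW that N_def Au0 usc[OF that] usc[of 0] by simp
    finally show ?thesis using usorth[OF that, of 0] N_def by simp
  qed
  have A'row: "A' $$ (0,j) = (if j = 0 then e else 0)" if "j < N" for j
  proof -
    have "A' $$ (0,j) = A'\<^sup>T $$ (0,j)" using symA' by simp
    also have "\<dots> = A' $$ (j,0)" using A' that N_def by simp
    finally show ?thesis using A'col[OF that] by simp
  qed
  define A3 where "A3 = mat m m (\<lambda>(i,j). A' $$ (Suc i, Suc j))"
  have A3: "A3 \<in> carrier_mat m m" unfolding A3_def by simp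
  have symA3: "A3\<^sup>T = A3"
  proof (rule eq_matI)
    fix i j assume ij: "i < dim_row A3" "j < dim_col A3"
    have "A' $$ (Suc j, Suc i) = A'\<^sup>T $$ (Suc i, Suc j)" using A' ij A3 N_def by simp
    thus "A3\<^sup>T $$ (i,j) = A3 $$ (i,j)" using ij A3 symA' unfolding A3_def by simp
  qed (insert A3, auto)
  obtain U3 es3 where U3: "U3 \<in> carrier_mat m m" and es3: "length es3 = m"
    and U3o: "U3\<^sup>T * U3 = 1\<^sub>m m" and A3eq: "A3 = U3 * dmat es3 * U3\<^sup>T"
    using Suc.IH[OF A3 symA3] by blast
  have d3: "dmat es3 \<in> carrier_mat m m" unfolding dmat_def using es3 by simp
  define B where "B = four_block_mat (1\<^sub>m 1) (0\<^sub>m 1 m) (0\<^sub>m m 1) U3"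
  have B: "B \<in> carrier_mat N N" unfolding B_def N_def using U3
    by (metis four_block_carrier_mat one_carrier_mat plus_1_eq_Suc)
  have Bt: "B\<^sup>T = four_block_mat (1\<^sub>m 1) (0\<^sub>m 1 m) (0\<^sub>m m 1) U3\<^sup>T"
    unfolding B_def by (subst transpose_four_block_mat, insert U3, auto)
  have BtB: "B\<^sup>T * B = 1\<^sub>m N" unfolding Bt unfolding B_def N_def
    by (subst mult_four_block_mat[of _ 1 1 _ m _ m _ _ 1 _ m], insert U3 U3o, auto)
  define D where "D = four_block_mat (e \<cdot>\<^sub>m 1\<^sub>m 1) (0\<^sub>m 1 m) (0\<^sub>m m 1) (dmat es3)"
  have Dd: "dmat (e # es3) = D" unfolding D_def
    by (rule eq_matI, insert es3, auto simp: dmat_def nth_Cons')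
  have D: "D \<in> carrier_mat N N" using Dd es3 N_def unfolding dmat_def
    by (metis carrier_matI dim_col_mat(1) dim_row_mat(1) length_Cons)
  have BD: "B * D = four_block_mat (e \<cdot>\<^sub>m 1\<^sub>m 1) (0\<^sub>m 1 m) (0\<^sub>m m 1) (U3 * dmat es3)"
    unfolding B_def D_def
    by (subst mult_four_block_mat[of _ 1 1 _ m _ m _ _ 1 _ m], insert U3 d3, auto)
  have BDBt: "B * D * B\<^sup>T = four_block_mat (e \<cdot>\<^sub>m 1\<^sub>m 1) (0\<^sub>m 1 m) (0\<^sub>m m 1) (U3 * dmat es3 * U3\<^sup>T)"
    unfolding BD Bt
    by (subst mult_four_block_mat[of _ 1 1 _ m _ m _ _ 1 _ m], insert U3 d3, auto)
  also have "\<dots> = A'"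
  proof (rule eq_matI)
    fix i j assume ij: "i < dim_row A'" "j < dim_col A'"
    show "four_block_mat (e \<cdot>\<^sub>m 1\<^sub>m 1) (0\<^sub>m 1 m) (0\<^sub>m m 1) (U3 * dmat es3 * U3\<^sup>T) $$ (i, j) = A' $$ (i,j)"
      unfolding A3eq[symmetric] using ij A' N_def A'col A'row
      by (cases i; cases j) (auto simp: A3_def)
  qed (insert A' N_def U3 d3, auto)
  finally have BDBt: "B * D * B\<^sup>T = A'" .
  note as = assoc_mult_mat[of _ N N _ N _ N]
  have Wt: "W\<^sup>T \<in> carrier_mat N N" using W by simp
  have Bt': "B\<^sup>T \<in> carrier_mat N N" using B by simp
  have WtWX: "W\<^sup>T * (W * X) = X" if "X \<in> carrier_mat N N" for X
    using WtW that W by (metis as Wt left_mult_one_mat)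
  have WWtX: "W * (W\<^sup>T * X) = X" if "X \<in> carrier_mat N N" for X
    using WWt that W by (metis as Wt left_mult_one_mat)
  have BtBX: "B\<^sup>T * (B * X) = X" if "X \<in> carrier_mat N N" for X
    using BtB that B by (metis as Bt' left_mult_one_mat)
  define U where "U = W * B"
  have U: "U \<in> carrier_mat N N" unfolding U_def using W B by simp
  have Ut: "U\<^sup>T = B\<^sup>T * W\<^sup>T" unfolding U_def by (rule transpose_mult[OF W B])
  have UtU: "U\<^sup>T * U = 1\<^sub>m N" unfolding Ut
    using W B Wt Bt' WtWX BtB by (simp add: as U_def)
  have "U * dmat (e # es3) * U\<^sup>T = W * (B * D * B\<^sup>T) * W\<^sup>T"
    unfolding Ut Dd using W B Wt Bt' D by (simp add: as U_def)
  also have "\<dots> = A" unfolding BDBt A'_def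
    using W Wt A WtWX WWtX by (simp add: as WWt)
  finally have "A = U * dmat (e # es3) * U\<^sup>T" ..
  thus ?case using U UtU es3 N_def by (intro exI[of _ U] exI[of _ "e # es3"]) auto
qed


lemma cauchy_schwarz_sum:
  fixes a b :: "nat \<Rightarrow> real"
  shows "(\<Sum>k\<in>K. a k * b k)^2 \<le> (\<Sum>k\<in>K. (a k)^2) * (\<Sum>k\<in>K. (b k)^2)"
proof -
  have "0 \<le> (\<Sum>k\<in>K. \<Sum>l\<in>K. (a k * b l - a l * b k)^2)"
    by (intro sum_nonneg) auto
  also have "\<dots> = (\<Sum>k\<in>K. \<Sum>l\<in>K. (a k)^2 * (b l)^2 + (a l)^2 * (b k)^2 - 2 * ((a k * b k) * (a l * b l)))"
    by (intro sum.cong refl) (simp add: power2_eq_square algebra_simps)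
  also have "\<dots> = (\<Sum>k\<in>K. \<Sum>l\<in>K. (a k)^2 * (b l)^2) + (\<Sum>k\<in>K. \<Sum>l\<in>K. (a l)^2 * (b k)^2)
      - 2 * (\<Sum>k\<in>K. \<Sum>l\<in>K. (a k * b k) * (a l * b l))"
    by (simp only: sum.distrib sum_subtractf sum_distrib_left)
  also have "\<dots> = 2 * ((\<Sum>k\<in>K. (a k)^2) * (\<Sum>k\<in>K. (b k)^2)) - 2 * (\<Sum>k\<in>K. a k * b k)^2"
  proof -
    have sw: "(\<Sum>k\<in>K. \<Sum>l\<in>K. (a l)^2 * (b k)^2) = (\<Sum>k\<in>K. \<Sum>l\<in>K. (a k)^2 * (b l)^2)"
      by (subst sum.swap) (simp add: mult.commute)
    show ?thesis unfolding sw sum_product[symmetric] power2_eq_square[of "sum _ _"]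
      by simp
  qed
  finally show ?thesis by simp
qed

lemma qform_nonneg:
  fixes a c :: "nat \<Rightarrow> real"
  shows "0 \<le> (\<Sum>k\<in>K. (c k)^2) - (\<Sum>k\<in>K. a k * c k)^2 / (\<Sum>k\<in>K. (a k)^2)"
proof (cases "(\<Sum>k\<in>K. (a k)^2) = 0")
  case True thus ?thesis by (simp add: sum_nonneg)
next
  case False
  hence pos: "(\<Sum>k\<in>K. (a k)^2) > 0" using sum_nonneg[of K "\<lambda>k. (a k)^2"]
    by (simp add: less_le)
  have "(\<Sum>k\<in>K. a k * c k)^2 / (\<Sum>k\<in>K. (a k)^2) \<le> (\<Sum>k\<in>K. (c k)^2)"
    using cauchy_schwarz_sum[of a c K] pos by (simp add: divide_le_eq mult.commute)
  thus ?thesis by simp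
qed


locale core =
  fixes N n :: nat and A V :: "nat \<Rightarrow> nat \<Rightarrow> real" and l :: "nat \<Rightarrow> real"
  assumes orth: "\<And>k k'. k < N \<Longrightarrow> k' < N \<Longrightarrow> (\<Sum>i<N. V k i * V k' i) = (if k = k' then 1 else 0)"
  and dec: "\<And>i j. i < N \<Longrightarrow> j < N \<Longrightarrow> A i j = (\<Sum>k<N. V k i * l k * V k j)"
  and nN: "n \<le> N"
begin

lemma symA: "i < N \<Longrightarrow> j < N \<Longrightarrow> A i j = A j i"
  by (simp add: dec mult.commute mult.left_commute)

lemma eig: assumes k: "k < N" and j: "j < N" shows "(\<Sum>i<N. A j i * V k i) = l k * V k j"
proof -
  have "(\<Sum>i<N. A j i * V k i) = (\<Sum>i<N. \<Sum>m<N. V m j * l m * (V m i * V k i))"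
    using j by (intro sum.cong refl) (simp add: dec sum_distrib_right mult.assoc)
  also have "\<dots> = (\<Sum>m<N. \<Sum>i<N. V m j * l m * (V m i * V k i))" by (rule sum.swap)
  also have "\<dots> = (\<Sum>m<N. V m j * l m * (\<Sum>i<N. V m i * V k i))" by (simp add: sum_distrib_left)
  also have "\<dots> = (\<Sum>m<N. if m = k then V k j * l k else 0)"
    using orth k by (intro sum.cong refl) simp
  also have "\<dots> = l k * V k j" using k by (simp add: sum.delta)
  finally show ?thesis .
qed

definition g where "g i = (\<Sum>j<N. A i j)"
definition alpha where "alpha k = (\<Sum>i<N. V k i * g i)"
definition Z where "Z = (\<Sum>k<n. (alpha k)^2)"
definition r where "r i = (\<Sum>k<n. alpha k * l k * V k i)"
definition Xf where "Xf D i j = ((\<Sum>k<n. (l k)^2 * V k i * V k j) - r i * r j / Z) / D"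
definition w where "w f k = (\<Sum>i<N. V k i * f i)"

lemma alpha_eq: assumes k: "k < N" shows "alpha k = l k * w (\<lambda>_. 1) k"
proof -
  have "alpha k = (\<Sum>i<N. \<Sum>j<N. A j i * V k i)"
    unfolding alpha_def g_def by (intro sum.cong refl) (simp add: sum_distrib_left symA mult.commute)
  also have "\<dots> = (\<Sum>j<N. \<Sum>i<N. A j i * V k i)" by (rule sum.swap)
  also have "\<dots> = (\<Sum>j<N. l k * V k j)" using eig k by simp
  finally show ?thesis unfolding w_def by (simp add: sum_distrib_left)
qed

lemma Z_nonneg: "Z \<ge> 0" unfolding Z_def by (simp add: sum_nonneg)

lemma quad: "(\<Sum>i<N. f i * (\<Sum>j<N. Xf D i j * f j)) =
   ((\<Sum>k<n. (l k * w f k)^2) - (\<Sum>k<n. alpha k * (l k * w f k))^2 / Z) / D"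
proof -
  have e1: "(\<Sum>i<N. \<Sum>j<N. f i * ((\<Sum>k<n. (l k)^2 * V k i * V k j) * f j)) = (\<Sum>k<n. (l k * w f k)^2)"
  proof -
    have "(\<Sum>i<N. \<Sum>j<N. f i * ((\<Sum>k<n. (l k)^2 * V k i * V k j) * f j))
       = (\<Sum>i<N. \<Sum>j<N. \<Sum>k<n. (l k)^2 * (V k i * f i) * (V k j * f j))"
      by (simp add: sum_distrib_left sum_distrib_right mult_ac)
    also have "\<dots> = (\<Sum>i<N. \<Sum>k<n. \<Sum>j<N. (l k)^2 * (V k i * f i) * (V k j * f j))"
      by (rule sum.cong[OF refl], rule sum.swap)
    also have "\<dots> = (\<Sum>k<n. \<Sum>i<N. \<Sum>j<N. (l k)^2 * (V k i * f i) * (V k j * f j))"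
      by (rule sum.swap)
    also have "\<dots> = (\<Sum>k<n. (l k * w f k)^2)"
      unfolding w_def power2_eq_square by (simp add: sum_distrib_left sum_distrib_right mult_ac)
    finally show ?thesis .
  qed
  have rf: "(\<Sum>i<N. f i * r i) = (\<Sum>k<n. alpha k * (l k * w f k))"
  proof -
    have "(\<Sum>i<N. f i * r i) = (\<Sum>i<N. \<Sum>k<n. alpha k * l k * (V k i * f i))"
      unfolding r_def by (simp add: sum_distrib_left mult_ac)
    also have "\<dots> = (\<Sum>k<n. \<Sum>i<N. alpha k * l k * (V k i * f i))" by (rule sum.swap)
    finally show ?thesis unfolding w_def by (simp add: sum_distrib_left mult_ac)
  qed
  have e2: "(\<Sum>i<N. \<Sum>j<N. f i * (r i * r j * f j)) = (\<Sum>k<n. alpha k * (l k * w f k))^2"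
    unfolding rf[symmetric] power2_eq_square by (simp add: sum_distrib_left sum_distrib_right mult_ac)
  have "(\<Sum>i<N. f i * (\<Sum>j<N. Xf D i j * f j)) =
     ((\<Sum>i<N. \<Sum>j<N. f i * ((\<Sum>k<n. (l k)^2 * V k i * V k j) * f j)) - (\<Sum>i<N. \<Sum>j<N. f i * (r i * r j * f j)) / Z) / D"
    unfolding Xf_def
    by (simp add: sum_distrib_left sum_distrib_right sum_subtractf sum_divide_distrib diff_divide_distrib
        left_diff_distrib right_diff_distrib mult_ac)
  thus ?thesis unfolding e1 e2 .
qed

lemma quad_nonneg: "D > 0 \<Longrightarrow> (\<Sum>i<N. f i * (\<Sum>j<N. Xf D i j * f j)) \<ge> 0"
  unfolding quad Z_def using qform_nonneg[where c="\<lambda>k. l k * w f k" and a=alpha and K="{..<n}"] by simp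

lemma quad_one: "(\<Sum>i<N. 1 * (\<Sum>j<N. Xf D i j * 1)) = 0"
proof -
  have "\<And>k. k < n \<Longrightarrow> l k * w (\<lambda>_. 1) k = alpha k" using alpha_eq nN by simp
  hence "(\<Sum>i<N. 1 * (\<Sum>j<N. Xf D i j * 1)) = (Z - Z^2 / Z) / D"
    unfolding quad[of "\<lambda>_. 1"] Z_def by (simp add: power2_eq_square)
  thus ?thesis by (cases "Z = 0") (simp_all add: power2_eq_square)
qed

lemma Asq: assumes i: "i < N" shows "(\<Sum>j<N. (A i j)^2) = (\<Sum>k<N. (l k)^2 * (V k i)^2)"
proof -
  have "(\<Sum>j<N. (A i j)^2) = (\<Sum>j<N. \<Sum>k<N. V k i * l k * (A i j * V k j))"
    by (intro sum.cong refl) (simp add: power2_eq_square dec[OF i] sum_distrib_left mult_ac)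
  also have "\<dots> = (\<Sum>k<N. \<Sum>j<N. V k i * l k * (A i j * V k j))" by (rule sum.swap)
  also have "\<dots> = (\<Sum>k<N. V k i * l k * (l k * V k i))"
    by (simp add: sum_distrib_left[symmetric] eig i)
  finally show ?thesis by (simp add: power2_eq_square mult_ac)
qed

lemma diag_le: assumes i: "i < N" and D: "D > 0" shows "Xf D i i \<le> (\<Sum>j<N. (A i j)^2) / D"
proof -
  have "r i * r i / Z \<ge> 0" using Z_nonneg by simp
  hence "Xf D i i \<le> (\<Sum>k<n. (l k)^2 * V k i * V k i) / D"
    unfolding Xf_def using D by (simp add: divide_right_mono)
  also have "(\<Sum>k<n. (l k)^2 * V k i * V k i) \<le> (\<Sum>k<N. (l k)^2 * V k i * V k i)"
  proof (rule sum_mono2)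
    fix b show "0 \<le> (l b)^2 * V b i * V b i"
      by (metis mult.assoc mult_nonneg_nonneg zero_le_power2 zero_le_square)
  qed (use nN in auto)
  hence "(\<Sum>k<n. (l k)^2 * V k i * V k i) / D \<le> (\<Sum>k<N. (l k)^2 * V k i * V k i) / D"
    using D by (simp add: divide_right_mono)
  finally show ?thesis unfolding Asq[OF i] by (simp add: power2_eq_square mult_ac)
qed

lemma XA: "(\<Sum>i<N. \<Sum>j<N. Xf D i j * A i j) =
  ((\<Sum>k<n. (l k)^3) - (\<Sum>k<n. (alpha k)^2 * (l k)^3) / Z) / D"
proof -
  have t1: "(\<Sum>i<N. \<Sum>j<N. (\<Sum>k<n. (l k)^2 * V k i * V k j) * A i j) = (\<Sum>k<n. (l k)^3)"
  proof -
    have "(\<Sum>i<N. \<Sum>j<N. (\<Sum>k<n. (l k)^2 * V k i * V k j) * A i j)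
      = (\<Sum>i<N. \<Sum>j<N. \<Sum>k<n. (l k)^2 * V k i * (A i j * V k j))"
      by (simp add: sum_distrib_right sum_distrib_left mult_ac)
    also have "\<dots> = (\<Sum>i<N. \<Sum>k<n. \<Sum>j<N. (l k)^2 * V k i * (A i j * V k j))"
      by (rule sum.cong[OF refl], rule sum.swap)
    also have "\<dots> = (\<Sum>k<n. \<Sum>i<N. \<Sum>j<N. (l k)^2 * V k i * (A i j * V k j))" by (rule sum.swap)
    also have "\<dots> = (\<Sum>k<n. \<Sum>i<N. (l k)^3 * (V k i * V k i))"
    proof (intro sum.cong refl)
      fix k i assume "k \<in> {..<n}" "i \<in> {..<N}"
      hence ki: "k < N" "i < N" using nN by auto
      have "(\<Sum>j<N. (l k)^2 * V k i * (A i j * V k j)) = (l k)^2 * V k i * (\<Sum>j<N. A i j * V k j)"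
        by (simp add: sum_distrib_left)
      also have "\<dots> = (l k)^2 * V k i * (l k * V k i)" using eig[OF ki] by simp
      finally show "(\<Sum>j<N. (l k)^2 * V k i * (A i j * V k j)) = (l k)^3 * (V k i * V k i)"
        by (simp add: power3_eq_cube power2_eq_square mult_ac)
    qed
    also have "\<dots> = (\<Sum>k<n. (l k)^3)"
      using nN orth by (simp add: sum_distrib_left[symmetric])
    finally show ?thesis .
  qed
  have Ar: "(\<Sum>j<N. A i j * r j) = (\<Sum>k<n. alpha k * (l k)^2 * V k i)" if i: "i < N" for i
  proof -
    have "(\<Sum>j<N. A i j * r j) = (\<Sum>j<N. \<Sum>k<n. alpha k * l k * (A i j * V k j))"
      unfolding r_def by (simp add: sum_distrib_left mult_ac)
    also have "\<dots> = (\<Sum>k<n. \<Sum>j<N. alpha k * l k * (A i j * V k j))" by (rule sum.swap)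
    also have "\<dots> = (\<Sum>k<n. alpha k * (l k)^2 * V k i)"
    proof (intro sum.cong refl)
      fix k assume "k \<in> {..<n}"
      hence k: "k < N" using nN by auto
      have "(\<Sum>j<N. alpha k * l k * (A i j * V k j)) = alpha k * l k * (\<Sum>j<N. A i j * V k j)"
        by (simp add: sum_distrib_left)
      also have "\<dots> = alpha k * l k * (l k * V k i)" using eig[OF k i] by simp
      finally show "(\<Sum>j<N. alpha k * l k * (A i j * V k j)) = alpha k * (l k)^2 * V k i"
        by (simp add: power2_eq_square mult_ac)
    qed
    finally show ?thesis .
  qed
  have t2: "(\<Sum>i<N. \<Sum>j<N. r i * r j * A i j) = (\<Sum>k<n. (alpha k)^2 * (l k)^3)"
  proof -
    have "(\<Sum>i<N. \<Sum>j<N. r i * r j * A i j) = (\<Sum>i<N. r i * (\<Sum>j<N. A i j * r j))"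
      by (simp add: sum_distrib_left mult_ac)
    also have "\<dots> = (\<Sum>i<N. r i * (\<Sum>k<n. alpha k * (l k)^2 * V k i))" using Ar by simp
    also have "\<dots> = (\<Sum>i<N. \<Sum>k<n. \<Sum>m<n. (alpha m * l m) * (alpha k * (l k)^2) * (V m i * V k i))"
      unfolding r_def by (simp add: sum_distrib_left sum_distrib_right mult_ac)
    also have "\<dots> = (\<Sum>k<n. \<Sum>i<N. \<Sum>m<n. (alpha m * l m) * (alpha k * (l k)^2) * (V m i * V k i))"
      by (rule sum.swap)
    also have "\<dots> = (\<Sum>k<n. \<Sum>m<n. \<Sum>i<N. (alpha m * l m) * (alpha k * (l k)^2) * (V m i * V k i))"
      by (rule sum.cong[OF refl], rule sum.swap)
    also have "\<dots> = (\<Sum>k<n. \<Sum>m<n. (alpha m * l m) * (alpha k * (l k)^2) * (if m = k then 1 else 0))"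
    proof (intro sum.cong refl)
      fix k m assume "k \<in> {..<n}" "m \<in> {..<n}"
      hence km: "k < N" "m < N" using nN by auto
      show "(\<Sum>i<N. (alpha m * l m) * (alpha k * (l k)^2) * (V m i * V k i)) =
        (alpha m * l m) * (alpha k * (l k)^2) * (if m = k then 1 else 0)"
        using orth[OF km(2) km(1)] by (simp add: sum_distrib_left[symmetric])
    qed
    also have "\<dots> = (\<Sum>k<n. (alpha k)^2 * (l k)^3)"
    proof (intro sum.cong refl)
      fix k assume "k \<in> {..<n}"
      have "(\<Sum>m<n. (alpha m * l m) * (alpha k * (l k)^2) * (if m = k then 1 else 0)) =
         (\<Sum>m<n. if m = k then (alpha k * l k) * (alpha k * (l k)^2) else 0)"
        by (intro sum.cong refl) auto
      also have "\<dots> = (alpha k)^2 * (l k)^3" using \<open>k \<in> {..<n}\<close>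
        by (simp add: sum.delta power2_eq_square power3_eq_cube mult_ac)
      finally show "(\<Sum>m<n. (alpha m * l m) * (alpha k * (l k)^2) * (if m = k then 1 else 0)) = (alpha k)^2 * (l k)^3" .
    qed
    finally show ?thesis .
  qed
  have "(\<Sum>i<N. \<Sum>j<N. Xf D i j * A i j) =
    ((\<Sum>i<N. \<Sum>j<N. (\<Sum>k<n. (l k)^2 * V k i * V k j) * A i j) - (\<Sum>i<N. \<Sum>j<N. r i * r j * A i j) / Z) / D"
    unfolding Xf_def
    by (simp add: sum_distrib_left sum_distrib_right sum_subtractf sum_divide_distrib diff_divide_distrib
        left_diff_distrib right_diff_distrib mult_ac)
  thus ?thesis unfolding t1 t2 .
qed

lemma trace: "(\<Sum>i<N. A i i) = (\<Sum>k<N. l k)"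
proof -
  have "(\<Sum>i<N. A i i) = (\<Sum>i<N. \<Sum>k<N. l k * (V k i * V k i))"
    by (intro sum.cong refl) (simp add: dec mult_ac)
  also have "\<dots> = (\<Sum>k<N. \<Sum>i<N. l k * (V k i * V k i))" by (rule sum.swap)
  also have "\<dots> = (\<Sum>k<N. l k)" using orth by (simp add: sum_distrib_left[symmetric])
  finally show ?thesis .
qed

lemma XA_ge:
  assumes D: "D > 0" and l0: "l 0 \<ge> 0" and top: "\<forall>k<n. l k \<le> l 0" and n: "n > 0"
  shows "(\<Sum>k\<in>{1..<n}. (l k)^3) / D \<le> (\<Sum>i<N. \<Sum>j<N. Xf D i j * A i j)"
proof -
  have "(\<Sum>k<n. (alpha k)^2 * (l k)^3) \<le> (\<Sum>k<n. (alpha k)^2 * (l 0)^3)"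
    using top by (intro sum_mono mult_left_mono power_mono_odd) auto
  also have "\<dots> = (l 0)^3 * Z" unfolding Z_def by (simp add: sum_distrib_left mult.commute)
  finally have le: "(\<Sum>k<n. (alpha k)^2 * (l k)^3) \<le> (l 0)^3 * Z" .
  have b: "(\<Sum>k<n. (alpha k)^2 * (l k)^3) / Z \<le> (l 0)^3"
  proof (cases "Z = 0")
    case True thus ?thesis using l0 by simp
  next
    case False
    hence "Z > 0" using Z_nonneg by simp
    thus ?thesis using le by (simp add: divide_le_eq)
  qed
  have "{..<n} = insert 0 {1..<n}" using n by auto
  hence s: "(\<Sum>k<n. (l k)^3) = (l 0)^3 + (\<Sum>k\<in>{1..<n}. (l k)^3)" by simp
  have "(\<Sum>k\<in>{1..<n}. (l k)^3) \<le> (\<Sum>k<n. (l k)^3) - (\<Sum>k<n. (alpha k)^2 * (l k)^3) / Z"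
    using s b by simp
  hence "(\<Sum>k\<in>{1..<n}. (l k)^3) / D \<le> ((\<Sum>k<n. (l k)^3) - (\<Sum>k<n. (alpha k)^2 * (l k)^3) / Z) / D"
    using D by (simp add: divide_right_mono)
  thus ?thesis unfolding XA .
qed

lemma XL:
  assumes D: "D > 0"
  shows "(\<Sum>i<N. \<Sum>j<N. Xf D i j * ((1 - b i * b j) / 2)) \<le> 0"
proof -
  have "(\<Sum>i<N. \<Sum>j<N. Xf D i j * ((1 - b i * b j) / 2)) =
     ((\<Sum>i<N. 1 * (\<Sum>j<N. Xf D i j * 1)) - (\<Sum>i<N. b i * (\<Sum>j<N. Xf D i j * b j))) / 2"
    by (simp add: sum_distrib_left sum_subtractf sum_divide_distrib diff_divide_distrib
        right_diff_distrib mult_ac)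
  also have "\<dots> = - (\<Sum>i<N. b i * (\<Sum>j<N. Xf D i j * b j)) / 2" unfolding quad_one by simp
  also have "\<dots> \<le> 0" using quad_nonneg[OF D, of b] by simp
  finally show ?thesis .
qed

end


lemma psd_entry_bound:
  assumes psd: "psd N Y" and diag: "\<forall>i<N. Y $$ (i,i) \<le> 1" and i: "i < N" and j: "j < N"
  shows "\<bar>Y $$ (i,j)\<bar> \<le> 1"
proof -
  have Y: "Y \<in> carrier_mat N N" and sym: "Y\<^sup>T = Y" and pos: "\<And>v. v \<in> carrier_vec N \<Longrightarrow> v \<bullet> (Y *\<^sub>v v) \<ge> 0"
    using psd unfolding psd_def by auto
  have symY: "Y $$ (j,i) = Y $$ (i,j)" using sym Y i j by (metis carrier_matD index_transpose_mat(1))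
  have q: "(vec N (\<lambda>k. (if k = i then 1 else 0) + s * (if k = j then 1 else 0))) \<bullet>
     (Y *\<^sub>v vec N (\<lambda>k. (if k = i then 1 else 0) + s * (if k = j then 1 else 0)))
     = Y $$ (i,i) + 2 * s * Y $$ (i,j) + s^2 * Y $$ (j,j)" for s :: real
  proof -
    define f where "f = (\<lambda>k. (if k = i then 1 else 0) + s * (if k = j then (1::real) else 0))"
    have rowsum: "(\<Sum>m<N. Y $$ (k,m) * f m) = Y $$ (k,i) + s * Y $$ (k,j)" for k
    proof -
      have "(\<Sum>m<N. Y $$ (k,m) * f m) = (\<Sum>m<N. (if m = i then Y $$ (k,i) else 0) + (if m = j then s * Y $$ (k,j) else 0))"
        unfolding f_def by (intro sum.cong refl) (auto simp: algebra_simps)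
      also have "\<dots> = Y $$ (k,i) + s * Y $$ (k,j)" using i j by (simp add: sum.distrib sum.delta)
      finally show ?thesis .
    qed
    have "vec N f \<bullet> (Y *\<^sub>v vec N f) = (\<Sum>k<N. f k * (\<Sum>m<N. Y $$ (k,m) * f m))"
      using Y by (simp add: scalar_prod_def mult_mat_vec_def row_def lessThan_atLeast0)
    also have "\<dots> = (\<Sum>k<N. f k * (Y $$ (k,i) + s * Y $$ (k,j)))" using rowsum by simp
    also have "\<dots> = (\<Sum>k<N. (if k = i then Y $$ (i,i) + s * Y $$ (i,j) else 0) + (if k = j then s * (Y $$ (j,i) + s * Y $$ (j,j)) else 0))"
      unfolding f_def by (intro sum.cong refl) (auto simp: algebra_simps)
    also have "\<dots> = Y $$ (i,i) + s * Y $$ (i,j) + s * (Y $$ (j,i) + s * Y $$ (j,j))"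
      using i j by (simp add: sum.distrib sum.delta)
    finally show ?thesis unfolding f_def symY by (simp add: power2_eq_square algebra_simps)
  qed
  have "0 \<le> Y $$ (i,i) + 2 * 1 * Y $$ (i,j) + 1^2 * Y $$ (j,j)"
    unfolding q[of 1, symmetric] by (rule pos) simp
  moreover have "0 \<le> Y $$ (i,i) + 2 * (-1) * Y $$ (i,j) + (-1)^2 * Y $$ (j,j)"
    unfolding q[of "-1", symmetric] by (rule pos) simp
  moreover have "Y $$ (i,i) \<le> 1" "Y $$ (j,j) \<le> 1" using diag i j by auto
  ultimately show ?thesis by (simp add: abs_le_iff)
qed


lemma sym_carrier: "symmetrization n M \<in> carrier_mat (2*n) (2*n)"
  unfolding symmetrization_def by simp

lemma sym_entry: "i < 2*n \<Longrightarrow> j < 2*n \<Longrightarrow> symmetrization n M $$ (i,j) =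
      (if i < n \<and> n \<le> j then M $$ (i, j - n) else if j < n \<and> n \<le> i then M $$ (j, i - n) else 0)"
  unfolding symmetrization_def by simp

lemma sym_transpose: "(symmetrization n M)\<^sup>T = symmetrization n M"
  by (rule eq_matI) (auto simp: sym_entry sym_carrier[THEN carrier_matD(1)] sym_carrier[THEN carrier_matD(2)])

lemma sym_diag: "i < 2*n \<Longrightarrow> symmetrization n M $$ (i,i) = 0"
  by (simp add: sym_entry)

lemma card_if_sum: "finite S \<Longrightarrow> (\<Sum>j\<in>S. if P j then 1 else 0) = real (card {j\<in>S. P j})"
  by (simp add: sum.inter_filter[symmetric])

lemma finite_degset: "finite ({card {j. j < n \<and> M $$ (i,j) = 1} | i. i < n}
                      \<union> {card {i. i < n \<and> M $$ (i,j) = 1} | j. j < n})"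
  by auto

lemma deg_bound:
  assumes zo: "zero_one_mat n M" and i: "i < 2*n"
  shows "(\<Sum>j<2*n. (symmetrization n M $$ (i,j))^2) \<le> real (max_degree n M)"
proof -
  have sq: "\<And>a b. a < n \<Longrightarrow> b < n \<Longrightarrow> (M $$ (a,b))^2 = (if M $$ (a,b) = 1 then 1 else 0)"
    using zo unfolding zero_one_mat_def by fastforce
  have zo01: "\<And>a b. a < n \<Longrightarrow> b < n \<Longrightarrow> M $$ (a,b) \<noteq> 1 \<Longrightarrow> M $$ (a,b) = 0"
    using zo unfolding zero_one_mat_def by blast
  show ?thesis
  proof (cases "i < n")
    case True
    have "(\<Sum>j<2*n. (symmetrization n M $$ (i,j))^2) = (\<Sum>j<2*n. if n \<le> j \<and> M $$ (i, j - n) = 1 then 1 else 0)"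
    proof (intro sum.cong refl)
      fix x assume "x \<in> {..<2*n}"
      thus "(symmetrization n M $$ (i,x))^2 = (if n \<le> x \<and> M $$ (i, x - n) = 1 then 1 else 0)"
        using True zo01[of i "x - n"] by (auto simp: sym_entry)
    qed
    also have "\<dots> = real (card {j \<in> {..<2*n}. n \<le> j \<and> M $$ (i, j - n) = 1})"
      by (rule card_if_sum) simp
    also have "{j \<in> {..<2*n}. n \<le> j \<and> M $$ (i, j - n) = 1} = (\<lambda>j. j + n) ` {j. j < n \<and> M $$ (i,j) = 1}"
    proof (rule equalityI)
      show "{j \<in> {..<2*n}. n \<le> j \<and> M $$ (i, j - n) = 1} \<subseteq> (\<lambda>j. j + n) ` {j. j < n \<and> M $$ (i,j) = 1}"
      proof
        fix x assume "x \<in> {j \<in> {..<2*n}. n \<le> j \<and> M $$ (i, j - n) = 1}"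
        thus "x \<in> (\<lambda>j. j + n) ` {j. j < n \<and> M $$ (i,j) = 1}"
          by (intro image_eqI[of _ _ "x - n"]) auto
      qed
    qed auto
    also have "card \<dots> = card {j. j < n \<and> M $$ (i,j) = 1}" by (rule card_image) (simp add: inj_on_def)
    also have "card {j. j < n \<and> M $$ (i,j) = 1} \<le> max_degree n M"
      unfolding max_degree_def by (rule Max_ge[OF finite_degset]) (use True in blast)
    finally show ?thesis by simp
  next
    case False
    have "(\<Sum>j<2*n. (symmetrization n M $$ (i,j))^2) = (\<Sum>j<2*n. if j < n \<and> M $$ (j, i - n) = 1 then 1 else 0)"
    proof (intro sum.cong refl)
      fix x assume "x \<in> {..<2*n}"
      thus "(symmetrization n M $$ (i,x))^2 = (if x < n \<and> M $$ (x, i - n) = 1 then 1 else 0)"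
        using False i zo01[of x "i - n"] by (auto simp: sym_entry)
    qed
    also have "\<dots> = real (card {j \<in> {..<2*n}. j < n \<and> M $$ (j, i - n) = 1})"
      by (rule card_if_sum) simp
    also have "{j \<in> {..<2*n}. j < n \<and> M $$ (j, i - n) = 1} = {j. j < n \<and> M $$ (j, i - n) = 1}" by auto
    also have "card {j. j < n \<and> M $$ (j, i - n) = 1} \<le> max_degree n M"
    proof -
      have "i - n < n" using False i by simp
      thus ?thesis unfolding max_degree_def by (intro Max_ge[OF finite_degset]) blast
    qed
    finally show ?thesis by simp
  qed
qed

lemma max_degree_pos:
  assumes "\<exists>i<n. \<exists>j<n. M $$ (i,j) = 1"
  shows "max_degree n M > 0"
proof -
  obtain i j where ij: "i < n" "j < n" "M $$ (i,j) = 1" using assms by blast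
  have "card {j. j < n \<and> M $$ (i,j) = 1} > 0"
    using ij by (subst card_gt_0_iff) auto
  also have "card {j. j < n \<and> M $$ (i,j) = 1} \<le> max_degree n M"
    unfolding max_degree_def by (rule Max_ge[OF finite_degset]) (use ij in blast)
  finally show ?thesis .
qed

lemma bip_entry: "i < 2*n \<Longrightarrow> j < 2*n \<Longrightarrow> bip_complete n $$ (i,j) =
   (1 - (if i < n then 1 else -1) * (if j < n then 1 else -1)) / 2"
  unfolding bip_complete_def by auto

lemma density_nonneg: "density n M \<ge> 0"
  unfolding density_def by simp

lemma disc_sum: "disc n M X = (\<Sum>i<2*n. \<Sum>j<2*n. X $$ (i,j) * (symmetrization n M $$ (i,j) - density n M * bip_complete n $$ (i,j)))"
  unfolding disc_def entry_inner_def
  by (simp add: sum_distrib_left sum_subtractf algebra_simps)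

lemma pdisc_ge:
  assumes "psd (2*n) X" "\<forall>i < 2*n. X $$ (i,i) \<le> 1"
  shows "disc n M X \<le> pdisc n M"
proof -
  define K where "K = (\<Sum>i<2*n. \<Sum>j<2*n. \<bar>symmetrization n M $$ (i,j) - density n M * bip_complete n $$ (i,j)\<bar>)"
  have "bdd_above {disc n M X | X. psd (2*n) X \<and> (\<forall>i < 2*n. X $$ (i,i) \<le> 1)}"
  proof (rule bdd_aboveI[of _ K], clarify)
    fix Y assume Y: "psd (2*n) Y" "\<forall>i < 2*n. Y $$ (i,i) \<le> 1"
    show "disc n M Y \<le> K" unfolding disc_sum K_def
    proof (intro sum_mono)
      fix i j assume "i \<in> {..<2*n}" "j \<in> {..<2*n}"
      hence b: "\<bar>Y $$ (i,j)\<bar> \<le> 1" using psd_entry_bound[OF Y] by auto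
      define c where "c = symmetrization n M $$ (i,j) - density n M * bip_complete n $$ (i,j)"
      have "Y $$ (i,j) * c \<le> \<bar>Y $$ (i,j)\<bar> * \<bar>c\<bar>" by (metis abs_ge_self abs_mult)
      also have "\<dots> \<le> 1 * \<bar>c\<bar>" using b by (intro mult_right_mono) auto
      finally show "Y $$ (i,j) * c \<le> \<bar>c\<bar>" by simp
    qed
  qed
  thus ?thesis unfolding pdisc_def by (rule cSup_upper[rotated]) (use assms in blast)
qed

lemma proots_prod_lin: "proots (\<Prod>a\<leftarrow>es. [:- a, 1:]) = mset (es :: real list)"
proof (induction es)
  case (Cons a es)
  have nz: "(\<Prod>a\<leftarrow>es. [:- a, 1:]) \<noteq> (0 :: real poly)"
    by (auto simp: prod_list_zero_iff)
  have "proots (\<Prod>a\<leftarrow>a # es. [:- a, 1:]) = proots ([:- a, 1:] * (\<Prod>a\<leftarrow>es. [:- a, 1:]))" by simp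
  also have "\<dots> = proots [:- a, 1:] + proots (\<Prod>a\<leftarrow>es. [:- a, 1:])"
    by (rule proots_mult) (use nz in auto)
  finally show ?case using Cons by (simp add: proots_linear_factor)
qed simp

lemma spectral_facts:
  fixes A U :: "real mat"
  assumes U: "U \<in> carrier_mat N N" and es: "length es = N" and UtU: "U\<^sup>T * U = 1\<^sub>m N"
    and AU: "A = U * dmat es * U\<^sup>T"
  shows "\<And>i j. i < N \<Longrightarrow> j < N \<Longrightarrow> A $$ (i,j) = (\<Sum>m<N. U $$ (i,m) * es!m * U $$ (j,m))"
    and "\<And>k k'. k < N \<Longrightarrow> k' < N \<Longrightarrow> (\<Sum>i<N. U $$ (i,k) * U $$ (i,k')) = (if k = k' then 1 else 0)"
    and "char_poly A = (\<Prod>a\<leftarrow>es. [:- a, 1:])"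
proof -
  have dm: "dmat es \<in> carrier_mat N N" unfolding dmat_def using es by simp
  have UD: "(U * dmat es) $$ (i,m) = U $$ (i,m) * es!m" if "i < N" "m < N" for i m
  proof -
    have "(U * dmat es) $$ (i,m) = (\<Sum>x<N. U $$ (i,x) * (if x = m then es!x else 0))"
      using U dm that by (simp add: scalar_prod_def dmat_def es lessThan_atLeast0)
    also have "\<dots> = (\<Sum>x<N. if x = m then U $$ (i,m) * es!m else 0)"
      by (intro sum.cong refl) auto
    finally show ?thesis using that by simp
  qed
  show "A $$ (i,j) = (\<Sum>m<N. U $$ (i,m) * es!m * U $$ (j,m))" if "i < N" "j < N" for i j
  proof -
    have "A $$ (i,j) = (\<Sum>m<N. (U * dmat es) $$ (i,m) * U $$ (j,m))"
      unfolding AU using U dm that by (simp add: scalar_prod_def lessThan_atLeast0 del: assoc_mult_mat)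
    thus ?thesis using UD that by simp
  qed
  show "(\<Sum>i<N. U $$ (i,k) * U $$ (i,k')) = (if k = k' then 1 else 0)" if "k < N" "k' < N" for k k'
  proof -
    have "(U\<^sup>T * U) $$ (k,k') = (\<Sum>i<N. U $$ (i,k) * U $$ (i,k'))"
      using U that by (simp add: scalar_prod_def lessThan_atLeast0)
    thus ?thesis using UtU that by simp
  qed
  have UUt: "U * U\<^sup>T = 1\<^sub>m N"
    by (rule mat_mult_left_right_inverse[OF _ U UtU], insert U, auto)
  have A: "A \<in> carrier_mat N N" unfolding AU using U dm by simp
  have "similar_mat A (dmat es)" unfolding similar_mat_def similar_mat_wit_def Let_def
    by (rule exI[of _ U], rule exI[of _ "U\<^sup>T"], insert A U dm UUt UtU AU, auto)
  hence "char_poly A = char_poly (dmat es)" by (rule char_poly_similar)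
  also have "\<dots> = (\<Prod>a\<leftarrow>diag_mat (dmat es). [:- a, 1:])"
    by (rule char_poly_upper_triangular[OF dm]) (auto simp: upper_triangular_def dmat_def)
  also have "diag_mat (dmat es) = es"
    by (rule nth_equalityI) (auto simp: diag_mat_def dmat_def)
  finally show "char_poly A = (\<Prod>a\<leftarrow>es. [:- a, 1:])" .
qed

theorem lemma3p2:
  fixes n :: nat and M :: "real mat"
  assumes "zero_one_mat n M"
    and "\<exists>i<n. \<exists>j<n. M $$ (i,j) = 1"
  shows "pdisc n M \<ge>
    (1 / real (max_degree n M)) *
      (\<Sum>i\<in>{2..n}. (eigenvalues_desc (symmetrization n M) ! (i - 1)) ^ 3)"
proof -
  note zo = assms(1)
  have n0: "n > 0" using assms(2) by auto
  define N where "N = 2 * n"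
  have N0: "N > 0" "n \<le> N" using n0 N_def by auto
  define A where "A = symmetrization n M"
  have A: "A \<in> carrier_mat N N" unfolding A_def N_def by (rule sym_carrier)
  have symA: "A\<^sup>T = A" unfolding A_def by (rule sym_transpose)
  obtain U es where U: "U \<in> carrier_mat N N" and es: "length es = N"
    and UtU: "U\<^sup>T * U = 1\<^sub>m N" and AU: "A = U * dmat es * U\<^sup>T"
    using spectral[OF A symA] by blast
  note sf = spectral_facts[OF U es UtU AU]
  define L where "L = eigenvalues_desc A"
  have Leq: "L = rev (sort es)"
    unfolding L_def eigenvalues_desc_def sf(3) proots_prod_lin sorted_list_of_multiset_mset ..
  have LN: "length L = N" using Leq es by simp
  have "mset L = mset es" using Leq by simp
  then obtain p where p: "p permutes {..<length es}" and pL: "permute_list p es = L"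
    by (rule mset_eq_permutation)
  have pN: "p permutes {..<N}" using p es by simp
  have Lnth: "L ! k = es ! (p k)" if "k < N" for k
    using pL permute_list_nth[OF p, of k] that es by simp
  have pk: "p k < N" if "k < N" for k using permutes_in_image[OF pN] that by simp
  have pinj: "p k = p k' \<longleftrightarrow> k = k'" for k k' using permutes_inj[OF pN] by (auto dest: injD)
  define V where "V = (\<lambda>k i. U $$ (i, p k))"
  define l where "l = (\<lambda>k. L ! k)"
  define Af where "Af = (\<lambda>i j. A $$ (i,j))"
  have orth: "(\<Sum>i<N. V k i * V k' i) = (if k = k' then 1 else 0)" if "k < N" "k' < N" for k k'
    unfolding V_def using sf(2)[OF pk[OF that(1)] pk[OF that(2)]] pinj by simp
  have dec: "Af i j = (\<Sum>k<N. V k i * l k * V k j)" if "i < N" "j < N" for i j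
  proof -
    have "Af i j = (\<Sum>m<N. U $$ (i,m) * es!m * U $$ (j,m))" unfolding Af_def using sf(1)[OF that] .
    also have "\<dots> = (\<Sum>k<N. U $$ (i,p k) * es!(p k) * U $$ (j,p k))"
      by (subst sum.permute[OF pN]) (simp add: comp_def)
    also have "\<dots> = (\<Sum>k<N. V k i * l k * V k j)"
      unfolding V_def l_def by (intro sum.cong refl) (simp add: Lnth)
    finally show ?thesis .
  qed
  interpret core N n Af V l
    by (unfold_locales) (use orth dec N0 in auto)
  define D where "D = real (max_degree n M)"
  have D0: "D > 0" unfolding D_def using max_degree_pos[OF assms(2)] by simp
  have rowD: "(\<Sum>j<N. (Af i j)^2) \<le> D" if "i < N" for i
    unfolding Af_def A_def D_def N_def using deg_bound[OF zo] that N_def by simp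
  have top: "l k \<le> l 0" if "k < N" for k
  proof -
    have "sorted (rev L)" using Leq by simp
    thus ?thesis unfolding l_def using sorted_rev_nth_mono[of L 0 k] that LN by simp
  qed
  have l0: "l 0 \<ge> 0"
  proof (rule ccontr)
    assume "\<not> l 0 \<ge> 0"
    hence neg: "l 0 < 0" by simp
    have "(\<Sum>i<N. Af i i) = 0" unfolding Af_def A_def N_def by (simp add: sym_diag)
    hence "(\<Sum>k<N. l k) = 0" using trace by simp
    moreover have "(\<Sum>k<N. l k) \<le> (\<Sum>k<N. l 0)" using top by (intro sum_mono) auto
    moreover have "(\<Sum>k<N. l 0) < 0" using neg N0 by (simp add: mult_pos_neg)
    ultimately show False by simp
  qed
  define X where "X = mat N N (\<lambda>(i,j). Xf D i j)"
  have X: "X \<in> carrier_mat N N" unfolding X_def by simp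
  have Xe: "X $$ (i,j) = Xf D i j" if "i < N" "j < N" for i j unfolding X_def using that by simp
  have psdX: "psd N X" unfolding psd_def
  proof (intro conjI ballI)
    show "X \<in> carrier_mat N N" by (rule X)
    show "X\<^sup>T = X" by (rule eq_matI) (auto simp: X_def Xf_def mult_ac)
  next
    fix v :: "real vec" assume v: "v \<in> carrier_vec N"
    have "v \<bullet> (X *\<^sub>v v) = (\<Sum>i<N. v$i * (\<Sum>j<N. Xf D i j * v$j))"
      using X v by (simp add: scalar_prod_def mult_mat_vec_def row_def lessThan_atLeast0 Xe)
    thus "v \<bullet> (X *\<^sub>v v) \<ge> 0" using quad_nonneg[OF D0, of "\<lambda>i. v$i"] by simp
  qed
  have diagX: "\<forall>i < 2*n. X $$ (i,i) \<le> 1"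
  proof (intro allI impI)
    fix i assume "i < 2*n"
    hence i: "i < N" using N_def by simp
    have "X $$ (i,i) \<le> (\<Sum>j<N. (Af i j)^2) / D" using Xe[OF i i] diag_le[OF i D0] by simp
    also have "\<dots> \<le> D / D" using rowD[OF i] D0 by (simp add: divide_right_mono)
    finally show "X $$ (i,i) \<le> 1" using D0 by simp
  qed
  define b where "b = (\<lambda>i. if i < n then 1 else - (1::real))"
  have "disc n M X = (\<Sum>i<N. \<Sum>j<N. Xf D i j * Af i j - density n M * (Xf D i j * ((1 - b i * b j) / 2)))"
    unfolding disc_sum N_def[symmetric] A_def[symmetric]
  proof (intro sum.cong refl)
    fix i j assume "i \<in> {..<N}" "j \<in> {..<N}"
    hence ij: "i < N" "j < N" by auto
    have bipeq: "bip_complete n $$ (i,j) = (1 - b i * b j) / 2" using bip_entry[of i n j] ij N_def b_def by simp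
    show "X $$ (i, j) * (A $$ (i, j) - density n M * bip_complete n $$ (i, j)) =
         Xf D i j * Af i j - density n M * (Xf D i j * ((1 - b i * b j) / 2))"
      unfolding bipeq Xe[OF ij] Af_def by (simp add: algebra_simps)
  qed
  also have "\<dots> = (\<Sum>i<N. \<Sum>j<N. Xf D i j * Af i j) - density n M * (\<Sum>i<N. \<Sum>j<N. Xf D i j * ((1 - b i * b j) / 2))"
    by (simp add: sum_subtractf sum_distrib_left)
  also have "\<dots> \<ge> (\<Sum>i<N. \<Sum>j<N. Xf D i j * Af i j)"
    using XL[OF D0, of b] density_nonneg[of n M] by (simp add: mult_nonneg_nonpos)
  finally have dX0: "disc n M X \<ge> (\<Sum>i<N. \<Sum>j<N. Xf D i j * Af i j)" .
  have tn: "\<forall>k<n. l k \<le> l 0" using top N0 by auto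
  have dX: "disc n M X \<ge> (\<Sum>k\<in>{1..<n}. (l k)^3) / D"
    by (rule order_trans[OF XA_ge[OF D0 l0 tn n0] dX0])
  have "(\<Sum>i\<in>{2..n}. (L ! (i - 1)) ^ 3) = (\<Sum>k\<in>{1..<n}. (l k)^3)"
  proof -
    have "{2..n} = Suc ` {1..<n}" by (simp add: image_Suc_atLeastLessThan atLeastLessThanSuc_atLeastAtMost)
    hence "(\<Sum>i\<in>{2..n}. (L ! (i - 1)) ^ 3) = (\<Sum>i\<in>Suc ` {1..<n}. (L ! (i - 1)) ^ 3)"
      by (simp only:)
    also have "\<dots> = (\<Sum>k\<in>{1..<n}. (L ! (Suc k - 1)) ^ 3)"
      by (rule sum.reindex[unfolded comp_def]) simp
    finally show ?thesis unfolding l_def by simp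
  qed
  hence "(1 / real (max_degree n M)) * (\<Sum>i\<in>{2..n}. (eigenvalues_desc (symmetrization n M) ! (i - 1)) ^ 3)
      = (\<Sum>k\<in>{1..<n}. (l k)^3) / D"
    unfolding L_def A_def D_def by simp
  also have "\<dots> \<le> disc n M X" by (rule dX)
  also have "\<dots> \<le> pdisc n M" using pdisc_ge[OF psdX[unfolded N_def] diagX] .
  finally show ?thesis .
qed

end
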